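(* Let $x\in\mathcal D$ be such that $s_n(t)=\sum_{i}|x(t^n_{i+1}\wedge t)-x(t^n_i\wedge t)|^2$ converges pointwise on $[0,\infty)$ to a function $s$ satisfying $s(t)=s^c(t)+\sum_{u\le t}(\Delta x(u))^2$ with $s^c$ continuous and nondecreasing. Then $q_n(t)=\sum_{i:\,t^n_i\le t}(x(t^n_{i+1})-x(t^n_i))^2$ converges pointwise on $[0,\infty)$ to a limit $q$, $q=s$, and $q(t)=q^c(t)+\sum_{u\le t}(\Delta x(u))^2$ with $q^c$ continuous and nondecreasing.
   Context: Let $\pi=(\pi_n)_{n\ge1}$ be a sequence of partitions $\pi_n=(t^n_0,\dots,t^n_{k_n})$ with $0=t^n_0<\dots<t^n_{k_n}<\infty$, $t^n_{k_n}\uparrow\infty$, and mesh tending to $0$ on compacts; sums over $i$ run over $0\le i<k_n$. $\mathcal D$ is the space of càdlàg functions $[0,\infty)\to\mathbb R$; $\Delta x(u)=x(u)-x(u-)$. *)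

theory Defs
  imports "HOL-Analysis.Analysis"
begin

definition partition_seq :: "(nat \<Rightarrow> nat \<Rightarrow> real) \<Rightarrow> (nat \<Rightarrow> nat) \<Rightarrow> bool" where
  "partition_seq t k \<longleftrightarrow>
     (\<forall>n. t n 0 = 0) \<and>
     (\<forall>n. \<forall>i<k n. t n i < t n (Suc i)) \<and>
     incseq (\<lambda>n. t n (k n)) \<and>
     filterlim (\<lambda>n. t n (k n)) at_top sequentially \<and>
     (\<forall>T>0. \<forall>e>0. eventually (\<lambda>n. \<forall>i<k n. min (t n (Suc i)) T - min (t n i) T < e) sequentially)"

definition cadlag :: "(real \<Rightarrow> real) \<Rightarrow> bool" where
  "cadlag x \<longleftrightarrow> (\<forall>u\<ge>0. continuous (at_right u) x) \<and> (\<forall>u>0. \<exists>l. (x \<longlongrightarrow> l) (at_left u))"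

text \<open>Jump Delta x(u) = x(u) - x(u-), with convention x(0-) = x(0).\<close>
definition jump :: "(real \<Rightarrow> real) \<Rightarrow> real \<Rightarrow> real" where
  "jump x u = (if u > 0 then x u - Lim (at_left u) x else 0)"

definition s_n :: "(nat \<Rightarrow> nat \<Rightarrow> real) \<Rightarrow> (nat \<Rightarrow> nat) \<Rightarrow> (real \<Rightarrow> real) \<Rightarrow> nat \<Rightarrow> real \<Rightarrow> real" where
  "s_n t k x n s = (\<Sum>i<k n. \<bar>x (min (t n (Suc i)) s) - x (min (t n i) s)\<bar>^2)"

definition q_n :: "(nat \<Rightarrow> nat \<Rightarrow> real) \<Rightarrow> (nat \<Rightarrow> nat) \<Rightarrow> (real \<Rightarrow> real) \<Rightarrow> nat \<Rightarrow> real \<Rightarrow> real" where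
  "q_n t k x n s = (\<Sum>i\<in>{i. i < k n \<and> t n i \<le> s}. (x (t n (Suc i)) - x (t n i))^2)"

end

theory Submission imports Defs begin
lemma tmono:
  fixes f :: "nat \<Rightarrow> real"
  assumes "\<forall>i<K. f i < f (Suc i)" "j \<le> l" "l \<le> K"
  shows "f j \<le> f l"
  using assms(2,3)
proof (induction l)
  case 0 then show ?case by simp
next
  case (Suc l)
  show ?case
  proof (cases "j = Suc l")
    case False
    then have "j \<le> l" using Suc.prems by simp
    then have "f j \<le> f l" using Suc by simp
    moreover have "f l < f (Suc l)" using assms(1) Suc.prems by simp
    ultimately show ?thesis by simp
  qed simp
qed

lemma decomp:
  fixes f :: "nat \<Rightarrow> real" and x :: "real \<Rightarrow> real"
  assumes inc: "\<forall>i<K. f i < f (Suc i)" and iK: "i < K" and fi: "f i \<le> r" and fs: "r < f (Suc i)"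
  shows "(\<Sum>j<K. \<bar>x (min (f (Suc j)) r) - x (min (f j) r)\<bar>^2)
          = (\<Sum>j<i. (x (f (Suc j)) - x (f j))^2) + (x r - x (f i))^2"
    and "(\<Sum>j\<in>{j. j<K \<and> f j \<le> r}. (x (f (Suc j)) - x (f j))^2)
          = (\<Sum>j<i. (x (f (Suc j)) - x (f j))^2) + (x (f (Suc i)) - x (f i))^2"
proof -
  have sp: "{..<K} = {..<Suc i} \<union> {Suc i..<K}" using iK by auto
  have z: "(\<Sum>j\<in>{Suc i..<K}. \<bar>x (min (f (Suc j)) r) - x (min (f j) r)\<bar>^2) = 0"
  proof (rule sum.neutral, rule ballI)
    fix j assume j: "j \<in> {Suc i..<K}"
    have "f (Suc i) \<le> f j" using tmono[OF inc, of "Suc i" j] j by auto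
    moreover have "f j < f (Suc j)" using inc j by auto
    ultimately show "\<bar>x (min (f (Suc j)) r) - x (min (f j) r)\<bar>^2 = 0" using fs by simp
  qed
  have lo: "(\<Sum>j<i. \<bar>x (min (f (Suc j)) r) - x (min (f j) r)\<bar>^2) = (\<Sum>j<i. (x (f (Suc j)) - x (f j))^2)"
  proof (rule sum.cong[OF refl])
    fix j assume j: "j \<in> {..<i}"
    have "f (Suc j) \<le> f i" using tmono[OF inc, of "Suc j" i] j iK by auto
    moreover have "f j \<le> f (Suc j)" using inc j iK by (simp add: less_imp_le)
    ultimately show "\<bar>x (min (f (Suc j)) r) - x (min (f j) r)\<bar>^2 = (x (f (Suc j)) - x (f j))^2"
      using fi by simp
  qed
  show "(\<Sum>j<K. \<bar>x (min (f (Suc j)) r) - x (min (f j) r)\<bar>^2)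
          = (\<Sum>j<i. (x (f (Suc j)) - x (f j))^2) + (x r - x (f i))^2"
    unfolding sp by (subst sum.union_disjoint) (use z lo fi fs in auto)
  have st: "{j. j<K \<and> f j \<le> r} = {..<Suc i}"
  proof (intro set_eqI iffI)
    fix j assume "j \<in> {j. j<K \<and> f j \<le> r}"
    then have "j < K" "f j \<le> r" by auto
    show "j \<in> {..<Suc i}"
    proof (rule ccontr)
      assume "j \<notin> {..<Suc i}"
      then have "f (Suc i) \<le> f j" using tmono[OF inc, of "Suc i" j] \<open>j < K\<close> by auto
      then show False using fs \<open>f j \<le> r\<close> by simp
    qed
  next
    fix j assume "j \<in> {..<Suc i}"
    then show "j \<in> {j. j<K \<and> f j \<le> r}" using tmono[OF inc, of j i] iK fi by auto
  qed
  show "(\<Sum>j\<in>{j. j<K \<and> f j \<le> r}. (x (f (Suc j)) - x (f j))^2)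
          = (\<Sum>j<i. (x (f (Suc j)) - x (f j))^2) + (x (f (Suc i)) - x (f i))^2"
    unfolding st by simp
qed

lemma diff_lim:
  assumes P: "partition_seq t k" and C: "cadlag x" and r0: "r \<ge> 0"
  shows "(\<lambda>n. q_n t k x n r - s_n t k x n r) \<longlonglongrightarrow> 0"
proof -
  have t0: "\<And>n. t n 0 = 0" and inc: "\<And>n. \<forall>i<k n. t n i < t n (Suc i)"
    and top: "filterlim (\<lambda>n. t n (k n)) at_top sequentially"
    and mesh: "\<And>T e. T > 0 \<Longrightarrow> e > 0 \<Longrightarrow> eventually (\<lambda>n. \<forall>i<k n. min (t n (Suc i)) T - min (t n i) T < e) sequentially"
    using P unfolding partition_seq_def by auto
  define i where "i n = (GREATEST j. j < k n \<and> t n j \<le> r)" for n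
  define a where "a n = t n (Suc (i n))" for n
  define b where "b n = t n (i n)" for n
  have E0: "eventually (\<lambda>n. r < t n (k n)) sequentially"
    using top by (simp add: filterlim_at_top_dense)
  have props: "i n < k n \<and> b n \<le> r \<and> r < a n \<and> 0 \<le> b n" if rt: "r < t n (k n)" for n
  proof -
    have kp: "0 < k n" using rt t0[of n] r0 by (cases "k n") auto
    have ex: "0 < k n \<and> t n 0 \<le> r" using kp t0 r0 by simp
    have G: "i n < k n \<and> t n (i n) \<le> r" unfolding i_def
      by (rule GreatestI_nat[of _ 0 "k n"]) (use ex in auto)
    have Gle: "j \<le> i n" if "j < k n" "t n j \<le> r" for j
      unfolding i_def by (rule Greatest_le_nat[of _ _ "k n"]) (use that in auto)
    have "r < a n"
    proof (cases "Suc (i n) < k n")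
      case True
      then show ?thesis using Gle[of "Suc (i n)"] unfolding a_def by force
    next
      case False
      then have "Suc (i n) = k n" using G by simp
      then show ?thesis using rt unfolding a_def by simp
    qed
    moreover have "0 \<le> b n" using tmono[OF inc[of n], of 0 "i n"] G t0[of n] unfolding b_def by simp
    ultimately show ?thesis using G unfolding b_def by simp
  qed
  have eqD: "eventually (\<lambda>n. q_n t k x n r - s_n t k x n r =
      (x (a n) - x (b n))^2 - (x r - x (b n))^2) sequentially"
    using E0
  proof (rule eventually_mono)
    fix n assume rt: "r < t n (k n)"
    note pr = props[OF rt]
    show "q_n t k x n r - s_n t k x n r = (x (a n) - x (b n))^2 - (x r - x (b n))^2"
      unfolding q_n_def s_n_def
      using decomp[OF inc[of n], of "i n" r x] pr unfolding a_def b_def by simp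
  qed
  have small: "eventually (\<lambda>n. a n - b n < e) sequentially" if e: "e > 0" for e
  proof -
    have "eventually (\<lambda>n. \<forall>j<k n. min (t n (Suc j)) (r+1) - min (t n j) (r+1) < min e 1) sequentially"
      using mesh[of "r+1" "min e 1"] r0 e by simp
    with E0 show ?thesis
    proof (eventually_elim)
      case (elim n)
      note pr = props[OF elim(1)]
      have m: "min (a n) (r+1) - min (b n) (r+1) < min e 1"
        using elim(2) pr unfolding a_def b_def by auto
      have "min (b n) (r+1) = b n" using pr by simp
      then show ?case using m pr by (cases "a n \<le> r + 1") auto
    qed
  qed
  have alim: "filterlim a (at_right r) sequentially"
  proof -
    have "(a \<longlongrightarrow> r) sequentially"
    proof (rule tendstoI)
      fix e :: real assume "e > 0"
      from small[OF this] E0 show "eventually (\<lambda>n. dist (a n) r < e) sequentially"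
      proof eventually_elim
        case (elim n)
        then show ?case using props[OF elim(2)] by (simp add: dist_real_def)
      qed
    qed
    moreover have "eventually (\<lambda>n. a n \<in> {r<..} \<and> a n \<noteq> r) sequentially"
      using E0 by eventually_elim (use props in auto)
    ultimately show ?thesis by (simp add: filterlim_at)
  qed
  have xr: "(x \<longlongrightarrow> x r) (at_right r)"
    using C r0 unfolding cadlag_def by (simp add: continuous_within)
  have xa: "(\<lambda>n. x (a n)) \<longlonglongrightarrow> x r"
    using filterlim_compose[OF xr alim] .
  have xa0: "(\<lambda>n. x (a n) - x r) \<longlonglongrightarrow> 0"
    using tendsto_diff[OF xa tendsto_const[of "x r"]] by simp
  obtain d M where d: "d > 0" and M: "\<And>y. r - d < y \<Longrightarrow> y \<le> r \<Longrightarrow> 0 \<le> y \<Longrightarrow> \<bar>x y\<bar> \<le> M"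
  proof (cases "r = 0")
    case True
    show ?thesis by (rule that[of 1 "\<bar>x 0\<bar>"]) (use True in auto)
  next
    case False
    then have rp: "r > 0" using r0 by simp
    then obtain l where l: "(x \<longlongrightarrow> l) (at_left r)" using C unfolding cadlag_def by auto
    then have "eventually (\<lambda>y. dist (x y) l < 1) (at_left r)" by (rule tendstoD) simp
    then obtain d where d: "d > 0" and dd: "\<And>y. y < r \<Longrightarrow> dist y r < d \<Longrightarrow> dist (x y) l < 1"
      unfolding eventually_at by auto
    show ?thesis
    proof (rule that[of d "max (\<bar>l\<bar> + 1) \<bar>x r\<bar>"])
      fix y assume y: "r - d < y" "y \<le> r" "0 \<le> y"
      show "\<bar>x y\<bar> \<le> max (\<bar>l\<bar> + 1) \<bar>x r\<bar>"
      proof (cases "y = r")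
        case False
        then have "dist (x y) l < 1" using dd[of y] y by (simp add: dist_real_def)
        then show ?thesis by (simp add: dist_real_def)
      qed simp
    qed (use d in simp)
  qed
  have bnd: "eventually (\<lambda>n. norm ((x (a n) - x (b n))^2 - (x r - x (b n))^2)
      \<le> \<bar>x (a n) - x r\<bar> * (1 + 2 * \<bar>x r\<bar> + 2 * M)) sequentially"
  proof -
    have "eventually (\<lambda>n. dist (x (a n) - x r) 0 < 1) sequentially"
      using xa0 by (rule tendstoD) simp
    with small[OF d] E0 show ?thesis
    proof eventually_elim
      case (elim n)
      note pr = props[OF elim(2)]
      have xb: "\<bar>x (b n)\<bar> \<le> M" using M[of "b n"] pr elim(1) by simp
      have id: "(x (a n) - x (b n))^2 - (x r - x (b n))^2
          = (x (a n) - x r) * ((x (a n) - x r) + 2 * x r - 2 * x (b n))"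
        by (simp add: power2_eq_square algebra_simps)
      have f2: "\<bar>(x (a n) - x r) + 2 * x r - 2 * x (b n)\<bar> \<le> 1 + 2 * \<bar>x r\<bar> + 2 * M"
        using elim(3) xb by (simp add: dist_real_def)
      show ?case unfolding id real_norm_def abs_mult
        by (rule mult_left_mono[OF f2]) simp
    qed
  qed
  have "(\<lambda>n. (x (a n) - x (b n))^2 - (x r - x (b n))^2) \<longlonglongrightarrow> 0"
  proof (rule Lim_null_comparison[OF bnd])
    show "(\<lambda>n. \<bar>x (a n) - x r\<bar> * (1 + 2 * \<bar>x r\<bar> + 2 * M)) \<longlonglongrightarrow> 0"
      using tendsto_mult_left_zero[OF tendsto_rabs_zero[OF xa0]] by simp
  qed
  then show ?thesis
    using tendsto_cong[OF eqD] by simp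
qed

theorem proposition2p4:
  fixes t :: "nat \<Rightarrow> nat \<Rightarrow> real" and k :: "nat \<Rightarrow> nat"
    and x s sc :: "real \<Rightarrow> real"
  assumes "partition_seq t k"
    and "cadlag x"
    and "\<forall>r\<ge>0. (\<lambda>n. s_n t k x n r) \<longlonglongrightarrow> s r"
    and "continuous_on {0..} sc" and "mono_on {0..} sc"
    and "\<forall>r\<ge>0. ((\<lambda>u. (jump x u)^2) has_sum (s r - sc r)) {0..r}"
  shows "\<exists>q. (\<forall>r\<ge>0. (\<lambda>n. q_n t k x n r) \<longlonglongrightarrow> q r)
           \<and> (\<forall>r\<ge>0. q r = s r)
           \<and> (\<exists>qc. continuous_on {0..} qc \<and> mono_on {0..} qc
                  \<and> (\<forall>r\<ge>0. ((\<lambda>u. (jump x u)^2) has_sum (q r - qc r)) {0..r}))"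
proof (intro exI conjI allI impI)
  fix r :: real assume r: "r \<ge> 0"
  have "(\<lambda>n. (q_n t k x n r - s_n t k x n r) + s_n t k x n r) \<longlonglongrightarrow> 0 + s r"
    by (rule tendsto_add[OF diff_lim[OF assms(1,2) r]]) (use assms(3) r in auto)
  then show "(\<lambda>n. q_n t k x n r) \<longlonglongrightarrow> s r" by simp
next
  show "continuous_on {0..} sc" "mono_on {0..} sc" by fact+
next
  fix r :: real assume "r \<ge> 0"
  then show "((\<lambda>u. (jump x u)^2) has_sum (s r - sc r)) {0..r}" using assms(6) by simp
qed simp

end
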